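(* For every $F\in\mathbb{N}$, the number $\mathrm{nF}(F)$ of reflective numerical semigroups with Frobenius number $F$ satisfies \[ \mathrm{nF}(F)=1-\tau_e(F)+\sum_{k=2}^{F}(-1)^k\left\lfloor \frac{F}{k}\right\rfloor, \] where $\tau_e(F)$ is the number of even positive divisors of $F$.
   Context: A numerical semigroup is a submonoid $S$ of $(\mathbb{N}_0,+)$ with finite complement; its genus is the number of elements of $\mathbb{N}_0\setminus S$ and its Frobenius number is its largest gap. A numerical semigroup $S$ of genus $g\ge1$ is called reflective if for every $z\in\{0,1,\dots,g-1\}$ exactly one of $z$ and $z+g$ belongs to $S$. *)

theory Defs
  imports Main
begin

definition numerical_semigroup :: "nat set \<Rightarrow> bool" where
  "numerical_semigroup S \<longleftrightarrow>
     0 \<in> S \<and> (\<forall>a\<in>S. \<forall>b\<in>S. a + b \<in> S) \<and> finite (UNIV - S)"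

definition genus :: "nat set \<Rightarrow> nat" where
  "genus S = card (UNIV - S)"

definition is_frobenius_number :: "nat set \<Rightarrow> nat \<Rightarrow> bool" where
  "is_frobenius_number S F \<longleftrightarrow> F \<notin> S \<and> (\<forall>x. F < x \<longrightarrow> x \<in> S)"

definition reflective :: "nat set \<Rightarrow> bool" where
  "reflective S \<longleftrightarrow> numerical_semigroup S \<and> genus S \<ge> 1 \<and>
     (\<forall>z < genus S. (z \<in> S) \<noteq> (z + genus S \<in> S))"

definition nF :: "nat \<Rightarrow> nat" where
  "nF F = card {S. reflective S \<and> is_frobenius_number S F}"

definition tau_e :: "nat \<Rightarrow> nat" where
  "tau_e F = card {d. 0 < d \<and> d dvd F \<and> even d}"

end

theory Submission
  imports Defs
begin

definition Sm :: "nat \<Rightarrow> nat \<Rightarrow> nat set" where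
  "Sm m g = {x. (x < g \<and> m dvd x) \<or> (g \<le> x \<and> \<not> (m dvd (x - g) \<and> x < 2*g))}"

lemma frob_unique: "is_frobenius_number S F \<Longrightarrow> is_frobenius_number S F' \<Longrightarrow> F = F'"
  unfolding is_frobenius_number_def by (metis linorder_neq_iff)

lemma mult_in: assumes "numerical_semigroup S" "m \<in> S" shows "m * j \<in> S"
proof (induction j)
  case 0 then show ?case using assms by (simp add: numerical_semigroup_def)
next
  case (Suc j)
  have "m * Suc j = m + m * j" by simp
  then show ?case using Suc assms by (simp add: numerical_semigroup_def)
qed

lemma big_in:
  assumes fin: "finite (UNIV - S)" and refl: "\<forall>z<g. (z\<in>S) \<noteq> (z+g\<in>S)"
    and gen: "card (UNIV - S) = g" and x: "2*g \<le> x"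
  shows "x \<in> S"
proof -
  define f where "f z = (if z \<in> S then z + g else z)" for z
  have sub: "f ` {..<g} \<subseteq> UNIV - S" using refl by (auto simp: f_def)
  have inj: "inj_on f {..<g}" unfolding inj_on_def f_def by auto
  have "card (f ` {..<g}) = g" using card_image[OF inj] by simp
  hence eq: "f ` {..<g} = UNIV - S" using card_subset_eq[OF fin sub] gen by simp
  have "x \<notin> f ` {..<g}" using x by (auto simp: f_def)
  thus ?thesis using eq by blast
qed

lemma Sm_gaps:
  assumes "0 < g"
  shows "UNIV - Sm m g = (\<lambda>z. if m dvd z then z + g else z) ` {..<g}"
proof (rule set_eqI)
  fix x
  show "x \<in> UNIV - Sm m g \<longleftrightarrow> x \<in> (\<lambda>z. if m dvd z then z + g else z) ` {..<g}"
  proof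
    assume "x \<in> UNIV - Sm m g"
    hence h: "\<not> ((x < g \<and> m dvd x) \<or> (g \<le> x \<and> \<not> (m dvd (x - g) \<and> x < 2*g)))"
      by (simp add: Sm_def)
    show "x \<in> (\<lambda>z. if m dvd z then z + g else z) ` {..<g}"
    proof (cases "x < g")
      case True
      then show ?thesis using h by (intro image_eqI[of _ _ x]) auto
    next
      case False
      then show ?thesis using h by (intro image_eqI[of _ _ "x - g"]) auto
    qed
  next
    assume "x \<in> (\<lambda>z. if m dvd z then z + g else z) ` {..<g}"
    then obtain z where "z < g" "x = (if m dvd z then z + g else z)" by auto
    then show "x \<in> UNIV - Sm m g" by (auto simp: Sm_def split: if_splits)
  qed
qed

lemma Sm_genus: assumes "0 < g" shows "genus (Sm m g) = g"
proof -
  have inj: "inj_on (\<lambda>z. if m dvd z then z + g else z) {..<g}"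
    unfolding inj_on_def by auto
  show ?thesis unfolding genus_def Sm_gaps[OF assms] card_image[OF inj] by simp
qed

lemma Sm_finite: assumes "0 < g" shows "finite (UNIV - Sm m g)"
  unfolding Sm_gaps[OF assms] by simp

lemma Sm_frob:
  assumes m: "0 < m" and nd: "\<not> m dvd g"
  shows "is_frobenius_number (Sm m g) (g + m * (g div m))"
proof -
  have g0: "0 < g" using nd by (cases g) auto
  have lt: "m * (g div m) < g" using nd
    by (metis div_mult_mod_eq dvd_eq_mod_eq_0 less_add_same_cancel1 mult.commute not_gr_zero)
  have lt2: "g < m * (g div m) + m" using m
    by (metis add.commute add_less_cancel_left div_mult_mod_eq mod_less_divisor mult.commute)
  have gap: "g + m * (g div m) \<notin> Sm m g" using lt by (auto simp: Sm_def)
  have "x \<in> Sm m g" if x: "g + m * (g div m) < x" for x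
  proof (cases "m dvd (x - g) \<and> x < 2*g")
    case True
    then obtain j where j: "x - g = m * j" by auto
    have "g div m < j" using x j by (metis add_diff_cancel_left' diff_less_mono le_add1 less_imp_le_nat mult_less_cancel1 order_less_le_trans)
    hence "m * (g div m) + m \<le> m * j" using m
      by (metis Suc_leI mult_Suc_right add.commute mult_le_mono2)
    then show ?thesis using True j lt2 x by linarith
  next
    case False
    then show ?thesis using x by (auto simp: Sm_def)
  qed
  thus ?thesis using gap unfolding is_frobenius_number_def by blast
qed

lemma Sm_iff: "x \<in> Sm m g \<longleftrightarrow> (x < g \<and> m dvd x) \<or> (g \<le> x \<and> \<not> (m dvd (x - g) \<and> x < 2*g))"
  by (simp add: Sm_def)

lemma Sm_add:
  assumes nd: "\<not> m dvd g" and a: "a \<in> Sm m g" and b: "b \<in> Sm m g" and ag: "a < g"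
  shows "a + b \<in> Sm m g"
proof (cases "b < g")
  case True
  have ma: "m dvd a" using a ag by (simp add: Sm_iff)
  have mb: "m dvd b" using b True by (simp add: Sm_iff)
  have d: "m dvd (a + b)" using ma mb by simp
  show ?thesis
  proof (cases "a + b < g")
    case True then show ?thesis using d by (simp add: Sm_iff)
  next
    case False
    have "\<not> m dvd (a + b - g)"
    proof
      assume "m dvd (a + b - g)"
      hence "m dvd (a + b - (a + b - g))" using d by (simp add: dvd_diff_nat)
      moreover have "a + b - (a + b - g) = g" using False by simp
      ultimately show False using nd by simp
    qed
    then show ?thesis using False by (simp add: Sm_iff)
  qed
next
  case False
  have ma: "m dvd a" using a ag by (simp add: Sm_iff)
  have hb: "\<not> (m dvd (b - g) \<and> b < 2*g)" using b False by (simp add: Sm_iff)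
  have e: "a + b - g = a + (b - g)" using False by simp
  have "\<not> (m dvd (a + b - g) \<and> a + b < 2*g)"
  proof
    assume h: "m dvd (a + b - g) \<and> a + b < 2*g"
    hence "m dvd (a + (b - g))" using e by simp
    hence "m dvd (b - g)" using ma by (simp add: dvd_add_right_iff)
    thus False using h hb by simp
  qed
  then show ?thesis using False by (simp add: Sm_iff)
qed

lemma Sm_add2:
  assumes "a \<in> Sm m g" "b \<in> Sm m g" "\<not> a < g" "\<not> b < g"
  shows "a + b \<in> Sm m g"
  using assms by (simp add: Sm_iff)

lemma Sm_semigroup:
  assumes m: "0 < m" and nd: "\<not> m dvd g"
  shows "numerical_semigroup (Sm m g)"
proof -
  have g0: "0 < g" using nd by (cases g) auto
  have "a + b \<in> Sm m g" if a: "a \<in> Sm m g" and b: "b \<in> Sm m g" for a b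
  proof (cases "a < g")
    case True then show ?thesis using Sm_add[OF nd a b] by simp
  next
    case F1: False
    show ?thesis
    proof (cases "b < g")
      case True then show ?thesis using Sm_add[OF nd b a] by (simp add: add.commute)
    next
      case False then show ?thesis using Sm_add2[OF a b F1] by simp
    qed
  qed
  moreover have "0 \<in> Sm m g" using g0 by (simp add: Sm_def)
  ultimately show ?thesis unfolding numerical_semigroup_def using Sm_finite[OF g0] by blast
qed

lemma Sm_reflective:
  assumes m: "0 < m" and nd: "\<not> m dvd g"
  shows "reflective (Sm m g)"
proof -
  have g0: "0 < g" using nd by (cases g) auto
  show ?thesis unfolding reflective_def Sm_genus[OF g0]
    using Sm_semigroup[OF assms] g0 by (auto simp: Sm_def)
qed


lemma diff_closed:
  assumes r: "reflective S" and a: "a \<in> S" and b: "b \<in> S" and ab: "a \<le> b" and bg: "b < genus S"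
  shows "b - a \<in> S"
proof (rule ccontr)
  assume n: "b - a \<notin> S"
  let ?g = "genus S"
  have ns: "numerical_semigroup S" and rf: "\<forall>z<?g. (z\<in>S) \<noteq> (z+?g\<in>S)" using r by (auto simp: reflective_def)
  have "b - a < ?g" using bg by simp
  hence "b - a + ?g \<in> S" using rf[rule_format, of "b - a"] n by simp
  hence "a + (b - a + ?g) \<in> S" using a ns by (simp add: numerical_semigroup_def)
  hence "b + ?g \<in> S" using ab by simp
  thus False using rf[rule_format, OF bg] b by simp
qed

lemma char:
  assumes r: "reflective S" and f: "is_frobenius_number S F" and ne: "S \<noteq> {x. x = 0 \<or> F < x}"
  shows "\<exists>m. 0 < m \<and> m < genus S \<and> \<not> m dvd genus S \<and> S = Sm m (genus S)"
proof -
  define g where "g = genus S"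
  have ns: "numerical_semigroup S" and rf: "\<forall>z<g. (z\<in>S) \<noteq> (z+g\<in>S)" and g1: "1 \<le> g"
    using r by (auto simp: reflective_def g_def)
  have fin: "finite (UNIV - S)" and z0: "0 \<in> S" using ns by (auto simp: numerical_semigroup_def)
  have big: "x \<in> S" if "2*g \<le> x" for x
    using big_in[OF fin rf _ that] by (simp add: g_def genus_def)
  have gS: "g \<notin> S" using rf[rule_format, of 0] g1 z0 by simp
  show ?thesis
  proof (cases "\<exists>x. 0 < x \<and> x < g \<and> x \<in> S")
    case False
    define T where "T = {x. x = 0 \<or> g < x}"
    have "S = T"
    proof (rule set_eqI)
      fix x
      show "x \<in> S \<longleftrightarrow> x \<in> T"
      proof (cases "x < g")
        case True then show ?thesis using False z0 by (auto simp: T_def)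
      next
        case ng: False
        show ?thesis
        proof (cases "x < 2*g")
          case True
          have "x - g < g" using True ng by simp
          hence "(x - g \<in> S) \<noteq> (x - g + g \<in> S)" using rf[rule_format, of "x - g"] by simp
          moreover have "x - g + g = x" using ng by simp
          moreover have "x - g \<in> S \<longleftrightarrow> x - g = 0" using False z0 \<open>x - g < g\<close> by auto
          ultimately show ?thesis using ng by (auto simp: T_def)
        next
          case False then show ?thesis using big g1 by (auto simp: T_def)
        qed
      qed
    qed
    have "is_frobenius_number T g" using g1 by (auto simp: T_def is_frobenius_number_def)
    hence "F = g" using f \<open>S = T\<close> frob_unique by blast
    hence False using ne \<open>S = T\<close> T_def by simp
    thus ?thesis ..
  next
    case True
    define m where "m = (LEAST x. 0 < x \<and> x < g \<and> x \<in> S)"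
    have mP: "0 < m \<and> m < g \<and> m \<in> S" using LeastI_ex[OF True] by (simp add: m_def)
    have mL: "\<not> (0 < y \<and> y < g \<and> y \<in> S)" if "y < m" for y
      using not_less_Least[OF that[unfolded m_def]] by (simp add: m_def)
    have low: "x \<in> S \<longleftrightarrow> m dvd x" if xg: "x < g" for x
    proof
      assume xs: "x \<in> S"
      have "m * (x div m) \<in> S" using mult_in[OF ns] mP by blast
      moreover have "m * (x div m) \<le> x" by simp
      ultimately have "x - m * (x div m) \<in> S" using diff_closed[OF r _ xs] xg by (simp add: g_def)
      hence "x mod m \<in> S" by (simp add: minus_mult_div_eq_mod)
      moreover have "x mod m < m" using mP by simp
      moreover have "x mod m < g" using mP \<open>x mod m < m\<close> by linarith
      ultimately have "x mod m = 0" using mL[of "x mod m"] by auto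
      thus "m dvd x" by auto
    next
      assume "m dvd x"
      then obtain j where "x = m * j" by auto
      thus "x \<in> S" using mult_in[OF ns] mP by blast
    qed
    have nd: "\<not> m dvd g"
    proof
      assume "m dvd g"
      then obtain j where "g = m*j" by (auto elim: dvdE)
      thus False using mult_in[OF ns, of m j] mP gS by simp
    qed
    have "S = Sm m g"
    proof (rule set_eqI)
      fix x
      show "x \<in> S \<longleftrightarrow> x \<in> Sm m g"
      proof (cases "x < g")
        case True then show ?thesis using low by (auto simp: Sm_def)
      next
        case ng: False
        show ?thesis
        proof (cases "x < 2*g")
          case True
          have lt: "x - g < g" using True ng by simp
          hence "(x - g \<in> S) \<noteq> (x - g + g \<in> S)" using rf[rule_format, of "x - g"] by simp
          moreover have "x - g + g = x" using ng by simp
          ultimately show ?thesis using ng True low[OF lt] by (auto simp: Sm_def)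
        next
          case False then show ?thesis using big by (auto simp: Sm_def)
        qed
      qed
    qed
    thus ?thesis using mP nd by (auto simp: g_def)
  qed
qed


lemma alt_sum:
  fixes a :: "nat \<Rightarrow> int"
  assumes "1 \<le> n"
  shows "(\<Sum>k = 2..n. (-1) ^ k * a k) =
         (\<Sum>k = 2..n. (if even k then a k - a (k+1) else 0)) + (if even n then a (n+1) else 0)"
  using assms
proof (induction n rule: nat_induct_at_least)
  case base then show ?case by simp
next
  case (Suc n)
  have s1: "(\<Sum>k = 2..Suc n. (-1) ^ k * a k) = (\<Sum>k = 2..n. (-1) ^ k * a k) + (-1)^(Suc n) * a (Suc n)"
    using Suc.hyps by (simp add: sum.cl_ivl_Suc)
  have s2: "(\<Sum>k = 2..Suc n. (if even k then a k - a (k+1) else 0)) =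
      (\<Sum>k = 2..n. (if even k then a k - a (k+1) else 0)) + (if even (Suc n) then a (Suc n) - a (Suc n + 1) else 0)"
    using Suc.hyps by (simp add: sum.cl_ivl_Suc)
  show ?case unfolding s1 s2 Suc.IH by auto
qed

lemma cardM:
  assumes k: "1 \<le> k" and F: "1 \<le> F"
  shows "int (card {m. k*m < F \<and> F < (k+1)*m}) = int ((F-1) div k) - int (F div (k+1))"
proof -
  have eq: "{m. k*m < F \<and> F < (k+1)*m} = {F div (k+1)<..(F-1) div k}"
  proof (rule set_eqI)
    fix m
    have "k*m < F \<longleftrightarrow> m \<le> (F-1) div k" using k F
      by (simp add: less_eq_div_iff_mult_less_eq mult.commute) linarith
    moreover have "F < (k+1)*m \<longleftrightarrow> F div (k+1) < m"
      by (simp add: div_less_iff_less_mult mult.commute)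
    ultimately show "m \<in> {m. k*m < F \<and> F < (k+1)*m} \<longleftrightarrow> m \<in> {F div (k+1)<..(F-1) div k}" by auto
  qed
  have le: "F div (k+1) \<le> (F-1) div k"
  proof (cases "F div (k+1) = 0")
    case True then show ?thesis by simp
  next
    case False
    have "F div (k+1) * (k+1) \<le> F" by (rule div_times_less_eq_dividend)
    hence "F div (k+1) * k \<le> F - 1" using False by (simp add: algebra_simps)
    thus ?thesis using k by (simp add: less_eq_div_iff_mult_less_eq)
  qed
  show ?thesis unfolding eq card_greaterThanAtMost using le by simp
qed

lemma div_pred:
  assumes k: "1 \<le> k" and F: "1 \<le> F"
  shows "int ((F-1) div k) = int (F div k) - (if k dvd F then 1 else 0)"
proof (cases "k dvd F")
  case True
  then obtain q where q: "F = k*q" by auto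
  with F obtain q' where q': "q = Suc q'" by (cases q) auto
  have e: "F - 1 = (k-1) + q'*k" using q q' k by (simp add: algebra_simps)
  have "((k-1) + q'*k) div k = q' + (k-1) div k" using k by (intro div_mult_self1) simp
  hence "(F-1) div k = q' + (k-1) div k" using e by simp
  hence "(F-1) div k = q'" using k by simp
  thus ?thesis using True q q' k by simp
next
  case False
  have "F mod k \<noteq> 0" using False by (simp add: dvd_eq_mod_eq_0)
  hence "(F-1) div k = F div k" using k F
    by (metis Suc_pred' div_Suc less_one linorder_not_le mod_Suc neq0_conv)
  thus ?thesis using False by simp
qed



definition S0 :: "nat \<Rightarrow> nat set" where "S0 F = {x. x = 0 \<or> F < x}"

lemma S0_ok:
  assumes F: "1 \<le> F"
  shows "reflective (S0 F) \<and> is_frobenius_number (S0 F) F"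
proof -
  have gaps: "UNIV - S0 F = {1..F}" by (auto simp: S0_def)
  have gen: "genus (S0 F) = F" unfolding genus_def gaps by simp
  have ns: "numerical_semigroup (S0 F)"
    unfolding numerical_semigroup_def gaps by (auto simp: S0_def)
  show ?thesis using ns F unfolding reflective_def gen is_frobenius_number_def
    by (auto simp: S0_def)
qed

definition PP :: "nat \<Rightarrow> (nat \<times> nat) set" where
  "PP F = Sigma {k \<in> {2..F}. even k} (\<lambda>k. {m. k*m < F \<and> F < (k+1)*m})"

definition phi :: "nat \<Rightarrow> nat \<times> nat \<Rightarrow> nat set" where
  "phi F p = Sm (snd p) (F - (fst p div 2) * snd p)"

lemma phi_good:
  assumes "(k, m) \<in> PP F"
  defines "g \<equiv> F - (k div 2) * m"
  shows "0 < m \<and> m < g \<and> \<not> m dvd g \<and> g + m * (g div m) = F \<and> (k div 2) * m < F"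
proof -
  define q where "q = k div 2"
  have k: "even k" "2 \<le> k" and a: "k*m < F" and b: "F < (k+1)*m" using assms(1) by (auto simp: PP_def)
  have kq: "k = 2*q" using k by (simp add: q_def)
  have q1: "1 \<le> q" using k kq by simp
  have m0: "0 < m" using b by (cases m) auto
  define r where "r = F - k*m"
  have r: "F = k*m + r" "0 < r" "r < m" using a b by (auto simp: r_def algebra_simps)
  have "q*m \<le> k*m" using kq by simp
  hence qmF: "q*m < F" using r by linarith
  have gq: "g = r + q*m" unfolding g_def q_def[symmetric] using r kq by (simp add: algebra_simps)
  have gd: "g div m = q" unfolding gq using r m0 by simp
  have gm: "g mod m = r" unfolding gq using r m0 by simp
  have "m \<le> q*m" using q1 by simp
  hence "m < g" using gq r by linarith
  moreover have "\<not> m dvd g" using gm r by (simp add: dvd_eq_mod_eq_0)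
  moreover have "g + m * (g div m) = F" unfolding gd gq using r kq by (simp add: algebra_simps)
  ultimately show ?thesis using m0 qmF q_def by simp
qed

lemma set_eq:
  assumes F: "1 \<le> F"
  shows "{S. reflective S \<and> is_frobenius_number S F} = insert (S0 F) (phi F ` PP F)"
proof
  show "insert (S0 F) (phi F ` PP F) \<subseteq> {S. reflective S \<and> is_frobenius_number S F}"
  proof
    fix S assume "S \<in> insert (S0 F) (phi F ` PP F)"
    then consider "S = S0 F" | p where "p \<in> PP F" "S = phi F p" by auto
    then show "S \<in> {S. reflective S \<and> is_frobenius_number S F}"
    proof cases
      case 1 then show ?thesis using S0_ok[OF F] by simp
    next
      case 2
      obtain k m where p: "p = (k, m)" by (cases p)
      define g where "g = F - (k div 2) * m"
      have G: "0 < m \<and> m < g \<and> \<not> m dvd g \<and> g + m * (g div m) = F"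
        using phi_good[of k m F] 2 p by (simp add: g_def)
      have S: "S = Sm m g" using 2 p by (simp add: phi_def g_def)
      show ?thesis using Sm_reflective[of m g] Sm_frob[of m g] G S by simp
    qed
  qed
next
  show "{S. reflective S \<and> is_frobenius_number S F} \<subseteq> insert (S0 F) (phi F ` PP F)"
  proof
    fix S assume "S \<in> {S. reflective S \<and> is_frobenius_number S F}"
    hence r: "reflective S" and f: "is_frobenius_number S F" by auto
    show "S \<in> insert (S0 F) (phi F ` PP F)"
    proof (cases "S = S0 F")
      case True then show ?thesis by simp
    next
      case False
      then obtain m where m: "0 < m" "m < genus S" "\<not> m dvd genus S" "S = Sm m (genus S)"
        using char[OF r f] by (auto simp: S0_def)
      define g where "g = genus S"
      have ff: "is_frobenius_number S (g + m * (g div m))" using Sm_frob[of m g] m by (simp add: g_def)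
      have Fe: "F = g + m * (g div m)" using frob_unique[OF f ff] .
      define q where "q = g div m"
      have lt: "m * q < g" using m(3) unfolding q_def g_def
        by (metis div_mult_mod_eq dvd_eq_mod_eq_0 less_add_same_cancel1 mult.commute not_gr_zero)
      have lt2: "g < m * q + m" using m(1) unfolding q_def
        by (metis add.commute add_less_cancel_left div_mult_mod_eq mod_less_divisor mult.commute)
      have q1: "1 \<le> q" using m(2) m(1) unfolding q_def g_def
        by (metis div_greater_zero_iff less_imp_le_nat less_one not_le)
      have c1: "2 \<le> 2*q" using q1 by simp
      have c2: "2*q*m < F" using Fe lt q_def by (simp add: algebra_simps)
      have c3: "F < (2*q+1) * m" using Fe lt2 q_def by (simp add: algebra_simps)
      have "2*q \<le> 2*q*m" using m(1) by simp
      hence c4: "2*q \<le> F" using c2 by linarith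
      have "(2*q, m) \<in> PP F" unfolding PP_def using c1 c2 c3 c4 by simp
      moreover have "phi F (2*q, m) = S" unfolding phi_def using Fe m(4) q_def g_def
        by (simp add: mult.commute)
      ultimately show ?thesis by blast
    qed
  qed
qed

lemma phi_inj: "inj_on (phi F) (PP F)"
proof (rule inj_onI)
  fix p p' assume p: "p \<in> PP F" and p': "p' \<in> PP F" and e: "phi F p = phi F p'"
  obtain k m where km: "p = (k, m)" by (cases p)
  obtain k' m' where km': "p' = (k', m')" by (cases p')
  define g where "g = F - (k div 2) * m"
  define g' where "g' = F - (k' div 2) * m'"
  have G: "0 < m \<and> m < g \<and> \<not> m dvd g \<and> g + m * (g div m) = F \<and> (k div 2) * m < F"
    using phi_good[of k m F] p km by (simp add: g_def)
  have G': "0 < m' \<and> m' < g' \<and> \<not> m' dvd g' \<and> g' + m' * (g' div m') = F \<and> (k' div 2) * m' < F"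
    using phi_good[of k' m' F] p' km' by (simp add: g'_def)
  have e2: "Sm m g = Sm m' g'" using e km km' by (simp add: phi_def g_def g'_def)
  have "genus (Sm m g) = g" "genus (Sm m' g') = g'" using G G' Sm_genus by auto
  hence gg: "g = g'" using e2 by simp
  have "m \<in> Sm m g" "m' \<in> Sm m' g'" using G G' by (auto simp: Sm_def)
  hence "m \<in> Sm m' g" "m' \<in> Sm m g" using e2 gg by auto
  hence "m' dvd m" "m dvd m'" using G G' gg by (auto simp: Sm_def)
  hence mm: "m = m'" by (simp add: dvd_antisym)
  have l1: "k div 2 * m < F" and l2: "k' div 2 * m' < F" using G G' by simp_all
  have "F - k div 2 * m = F - k' div 2 * m'" using gg unfolding g_def g'_def .
  hence "(k div 2) * m = (k' div 2) * m'" using l1 l2 by linarith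
  hence "(k div 2) * m = (k' div 2) * m" using mm by simp
  hence "k div 2 = k' div 2" using G by simp
  moreover have "even k" "even k'" using p p' km km' by (auto simp: PP_def)
  ultimately have "k = k'" by (metis dvd_mult_div_cancel)
  thus "p = p'" using km km' mm by simp
qed

lemma S0_notin: assumes F: "1 \<le> F" shows "S0 F \<notin> phi F ` PP F"
proof
  assume "S0 F \<in> phi F ` PP F"
  then obtain k m where p: "(k, m) \<in> PP F" and e: "S0 F = phi F (k, m)" by auto
  define g where "g = F - (k div 2) * m"
  have G: "0 < m \<and> m < g \<and> \<not> m dvd g \<and> g + m * (g div m) = F"
    using phi_good[of k m F] p by (simp add: g_def)
  have "m \<in> Sm m g" using G by (auto simp: Sm_def)
  hence "m \<in> S0 F" using e by (simp add: phi_def g_def)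
  moreover have "m \<le> F" using G g_def by simp
  ultimately show False using G by (simp add: S0_def)
qed

lemma PP_finite: "finite (PP F)"
proof (rule finite_subset)
  show "PP F \<subseteq> {..F} \<times> {..F}"
  proof
    fix p assume "p \<in> PP F"
    then obtain k m where p: "p = (k, m)" and k: "2 \<le> k" "k \<le> F" and a: "k*m < F"
      by (auto simp: PP_def)
    have "1*m \<le> k*m" using k by (intro mult_le_mono1) simp
    hence "m \<le> F" using a by linarith
    thus "p \<in> {..F} \<times> {..F}" using p k by simp
  qed
qed simp

theorem mainTheorem19:
  fixes F :: nat
  assumes "F \<ge> 1"
  shows "int (nF F) = 1 - int (tau_e F) + (\<Sum>k = 2..F. (-1) ^ k * int (F div k))"
proof -
  define K where "K = {k \<in> {2..F}. even k}"
  have Kf: "finite K" by (simp add: K_def)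
  have nf: "nF F = Suc (card (PP F))"
    unfolding nF_def set_eq[OF assms] using S0_notin[OF assms] PP_finite
    by (simp add: card_image[OF phi_inj])
  have cP: "card (PP F) = (\<Sum>k\<in>K. card {m. k*m < F \<and> F < (k+1)*m})"
    unfolding PP_def K_def[symmetric]
  proof (rule card_SigmaI[OF Kf], intro ballI)
    fix k assume "k \<in> K"
    hence k2: "2 \<le> k" by (simp add: K_def)
    have "{m. k*m < F \<and> F < (k+1)*m} \<subseteq> {..F}"
    proof
      fix m assume "m \<in> {m. k*m < F \<and> F < (k+1)*m}"
      hence a: "k*m < F" by simp
      have "1*m \<le> k*m" using k2 by (intro mult_le_mono1) simp
      hence "m \<le> F" using a by linarith
      thus "m \<in> {..F}" by simp
    qed
    thus "finite {m. k*m < F \<and> F < (k+1)*m}" by (rule finite_subset) simp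
  qed
  have "int (card (PP F)) = (\<Sum>k\<in>K. int ((F-1) div k) - int (F div (k+1)))"
    unfolding cP of_nat_sum
  proof (rule sum.cong[OF refl])
    fix k assume "k \<in> K"
    hence "1 \<le> k" by (simp add: K_def)
    thus "int (card {m. k*m < F \<and> F < (k+1)*m}) = int ((F-1) div k) - int (F div (k+1))"
      using cardM[OF _ assms] by blast
  qed
  also have "\<dots> = (\<Sum>k\<in>K. (int (F div k) - int (F div (k+1))) - (if k dvd F then 1 else 0))"
  proof (rule sum.cong[OF refl])
    fix k assume "k \<in> K"
    hence "1 \<le> k" by (simp add: K_def)
    thus "int ((F-1) div k) - int (F div (k+1)) = (int (F div k) - int (F div (k+1))) - (if k dvd F then 1 else 0)"
      using div_pred[OF _ assms] by simp
  qed
  also have "\<dots> = (\<Sum>k\<in>K. int (F div k) - int (F div (k+1))) - (\<Sum>k\<in>K. (if k dvd F then 1 else 0))"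
    by (simp add: sum_subtractf)
  finally have c1: "int (card (PP F)) = (\<Sum>k\<in>K. int (F div k) - int (F div (k+1))) - (\<Sum>k\<in>K. (if k dvd F then 1 else 0))" .
  have t: "(\<Sum>k\<in>K. (if k dvd F then 1 else 0 :: int)) = int (tau_e F)"
  proof -
    have "{d. 0 < d \<and> d dvd F \<and> even d} = {k \<in> K. k dvd F}"
    proof (rule set_eqI)
      fix d
      show "d \<in> {d. 0 < d \<and> d dvd F \<and> even d} \<longleftrightarrow> d \<in> {k \<in> K. k dvd F}"
      proof
        assume h: "d \<in> {d. 0 < d \<and> d dvd F \<and> even d}"
        hence "d \<le> F" using assms by (auto intro: dvd_imp_le)
        moreover have "2 \<le> d" using h by (auto elim!: evenE)
        ultimately show "d \<in> {k \<in> K. k dvd F}" using h by (simp add: K_def)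
      qed (auto simp: K_def)
    qed
    moreover have "(\<Sum>k\<in>K. (if k dvd F then 1 else 0 :: int)) = int (card {k \<in> K. k dvd F})"
      using Kf by (simp add: sum.If_cases Collect_conj_eq)
    ultimately show ?thesis unfolding tau_e_def by simp
  qed
  have s: "(\<Sum>k\<in>K. int (F div k) - int (F div (k+1))) = (\<Sum>k = 2..F. (-1) ^ k * int (F div k))"
  proof -
    have "(\<Sum>k\<in>K. int (F div k) - int (F div (k+1))) =
          (\<Sum>k = 2..F. (if even k then int (F div k) - int (F div (k+1)) else 0))"
      unfolding K_def by (rule sum.inter_filter) simp
    also have "\<dots> = (\<Sum>k = 2..F. (-1) ^ k * int (F div k))"
      using alt_sum[of F "\<lambda>k. int (F div k)", OF assms] by simp
    finally show ?thesis .
  qed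
  show ?thesis using nf c1 t s by simp
qed

end
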